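(* For every $(z,\tau)\in\mathbb{C}\times\mathbb{H}^2$ the following four identities hold, where theta constants without arguments are evaluated at $(0,\tau)$: \begin{align*} &\theta^2\!\begin{bmatrix}1\\ \tfrac12\end{bmatrix}\theta^2\!\begin{bmatrix}1\\ 0\end{bmatrix}\!(z,\tau)+\theta^2\!\begin{bmatrix}1\\ 0\end{bmatrix}\theta\!\begin{bmatrix}1\\ \tfrac12\end{bmatrix}\!(z,\tau)\,\theta\!\begin{bmatrix}1\\ \tfrac32\end{bmatrix}\!(z,\tau)-\theta^2\!\begin{bmatrix}1\\ \tfrac12\end{bmatrix}\theta^2\!\begin{bmatrix}1\\ 1\end{bmatrix}\!(z,\tau)=0,\\ &\theta^2\!\begin{bmatrix}1\\ \tfrac23\end{bmatrix}\theta\!\begin{bmatrix}1\\ \tfrac13\end{bmatrix}\!(z,\tau)\,\theta\!\begin{bmatrix}1\\ \tfrac53\end{bmatrix}\!(z,\tau)-\theta^2\!\begin{bmatrix}1\\ \tfrac13\end{bmatrix}\theta\!\begin{bmatrix}1\\ \tfrac23\end{bmatrix}\!(z,\tau)\,\theta\!\begin{bmatrix}1\\ \tfrac43\end{bmatrix}\!(z,\tau)+\theta\!\begin{bmatrix}1\\ 0\end{bmatrix}\theta\!\begin{bmatrix}1\\ \tfrac23\end{bmatrix}\theta^2\!\begin{bmatrix}1\\ 1\end{bmatrix}\!(z,\tau)=0,\\ &\theta^2\!\begin{bmatrix}1\\ \tfrac34\end{bmatrix}\theta\!\begin{bmatrix}1\\ \tfrac14\end{bmatrix}\!(z,\tau)\,\theta\!\begin{bmatrix}1\\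 \tfrac74\end{bmatrix}\!(z,\tau)-\theta^2\!\begin{bmatrix}1\\ \tfrac14\end{bmatrix}\theta\!\begin{bmatrix}1\\ \tfrac34\end{bmatrix}\!(z,\tau)\,\theta\!\begin{bmatrix}1\\ \tfrac54\end{bmatrix}\!(z,\tau)+\theta\!\begin{bmatrix}1\\ 0\end{bmatrix}\theta\!\begin{bmatrix}1\\ \tfrac12\end{bmatrix}\theta^2\!\begin{bmatrix}1\\ 1\end{bmatrix}\!(z,\tau)=0,\\ &\theta^2\!\begin{bmatrix}1\\ \tfrac35\end{bmatrix}\theta\!\begin{bmatrix}1\\ \tfrac15\end{bmatrix}\!(z,\tau)\,\theta\!\begin{bmatrix}1\\ \tfrac95\end{bmatrix}\!(z,\tau)-\theta^2\!\begin{bmatrix}1\\ \tfrac15\end{bmatrix}\theta\!\begin{bmatrix}1\\ \tfrac35\end{bmatrix}\!(z,\tau)\,\theta\!\begin{bmatrix}1\\ \tfrac75\end{bmatrix}\!(z,\tau)+\theta\!\begin{bmatrix}1\\ \tfrac15\end{bmatrix}\theta\!\begin{bmatrix}1\\ \tfrac35\end{bmatrix}\theta^2\!\begin{bmatrix}1\\ 1\end{bmatrix}\!(z,\tau)=0. \end{align*}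
   Context: $\mathbb{H}^2=\{\tau\in\mathbb{C}:\operatorname{Im}\tau>0\}$. For $\epsilon,\epsilon'\in\mathbb{R}$, $\zeta\in\mathbb{C}$, $\tau\in\mathbb{H}^2$, the theta function with characteristics is $\theta\begin{bmatrix}\epsilon\\ \epsilon'\end{bmatrix}(\zeta,\tau)=\sum_{n\in\mathbb{Z}}\exp\!\Big(2\pi i\Big[\tfrac12\big(n+\tfrac{\epsilon}{2}\big)^2\tau+\big(n+\tfrac{\epsilon}{2}\big)\big(\zeta+\tfrac{\epsilon'}{2}\big)\Big]\Big)$. The theta constant $\theta\begin{bmatrix}\epsilon\\ \epsilon'\end{bmatrix}$ (no argument) means $\theta\begin{bmatrix}\epsilon\\ \epsilon'\end{bmatrix}(0,\tau)$, and $\theta^k[\cdot]$ denotes the $k$-th power. *)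

theory Defs
  imports "HOL-Analysis.Analysis"
begin

text \<open>The series converges absolutely for Im tau > 0; we use the unordered sum over the integers.\<close>
definition theta_char :: "real \<Rightarrow> real \<Rightarrow> complex \<Rightarrow> complex \<Rightarrow> complex" where
  "theta_char \<epsilon> \<epsilon>' \<zeta> \<tau> =
     (\<Sum>\<^sub>\<infinity>n::int. exp (2 * pi * \<i> *
        ((1/2) * (of_int n + of_real (\<epsilon>/2))\<^sup>2 * \<tau>
         + (of_int n + of_real (\<epsilon>/2)) * (\<zeta> + of_real (\<epsilon>'/2)))))"

definition theta_const :: "real \<Rightarrow> real \<Rightarrow> complex \<Rightarrow> complex" where
  "theta_const \<epsilon> \<epsilon>' \<tau> = theta_char \<epsilon> \<epsilon>' 0 \<tau>"

end

theory Submission imports Defs begin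

lemma exp_abs_int_summable: "(\<lambda>n::int. exp (- \<bar>real_of_int n\<bar>)) summable_on UNIV"
proof -
  have geo: "summable (\<lambda>n::nat. norm (exp (-1::real) ^ n))"
    by (simp add: summable_geometric)
  have s1: "(\<lambda>n::nat. exp (-1::real) ^ n) summable_on UNIV"
    by (rule norm_summable_imp_summable_on[OF geo])
  have s2: "(\<lambda>n::nat. exp (-1::real) * exp (-1::real) ^ n) summable_on UNIV"
    using summable_on_cmult_right[OF s1] by simp
  have e1: "(\<lambda>n::int. exp (- \<bar>real_of_int n\<bar>)) \<circ> int = (\<lambda>n::nat. exp (-1::real) ^ n)"
    by (auto simp: fun_eq_iff exp_of_nat_mult[symmetric])
  have e2: "(\<lambda>n::int. exp (- \<bar>real_of_int n\<bar>)) \<circ> (\<lambda>n. - int n - 1) = (\<lambda>n::nat. exp (-1::real) * exp (-1::real) ^ n)"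
    by (auto simp: fun_eq_iff exp_of_nat_mult[symmetric] exp_add[symmetric])
  have a: "(\<lambda>n::int. exp (- \<bar>real_of_int n\<bar>)) summable_on (int ` UNIV)"
    by (subst summable_on_reindex) (auto simp: e1 s1)
  have b: "(\<lambda>n::int. exp (- \<bar>real_of_int n\<bar>)) summable_on ((\<lambda>n. - int n - 1) ` UNIV)"
    by (subst summable_on_reindex) (auto simp: e2 s2 inj_on_def)
  have U: "int ` UNIV \<union> (\<lambda>n. - int n - 1) ` UNIV = UNIV"
  proof -
    have "x \<in> int ` UNIV \<union> (\<lambda>n. - int n - 1) ` UNIV" for x :: int
    proof (cases "x \<ge> 0")
      case True then show ?thesis by (auto intro: image_eqI[where x="nat x"])
    next
      case False then show ?thesis by (auto intro!: image_eqI[where x="nat (-x-1)"])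
    qed
    then show ?thesis by auto
  qed
  show ?thesis using summable_on_union[OF a b] U by simp
qed

lemma quad_bound:
  fixes a B t :: real assumes "a > 0"
  shows "- a * t^2 + B * t \<le> B^2 / (4*a)"
proof -
  have "0 \<le> a * (t - B/(2*a))^2" using assms by simp
  also have "a * (t - B/(2*a))^2 = a*t^2 - B*t + B^2/(4*a)"
    using assms by (simp add: power2_eq_square field_simps)
  finally show ?thesis by simp
qed

lemma gauss_norm_summable:
  fixes \<alpha> \<beta> \<gamma> :: complex assumes "Re \<alpha> < 0"
  shows "(\<lambda>n::int. norm (exp (\<alpha> * of_int n ^2 + \<beta> * of_int n + \<gamma>))) summable_on UNIV"
proof -
  define a where "a = - Re \<alpha>"
  define B where "B = \<bar>Re \<beta>\<bar> + 1"
  define K where "K = exp (Re \<gamma> + B^2/(4*a))"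
  have a: "a > 0" using assms a_def by simp
  have bound: "norm (exp (\<alpha> * of_int n ^2 + \<beta> * of_int n + \<gamma>)) \<le> K * exp (- \<bar>real_of_int n\<bar>)" for n
  proof -
    have n1: "norm (exp (\<alpha> * of_int n ^2 + \<beta> * of_int n + \<gamma>)) = exp (- a * real_of_int n ^2 + Re \<beta> * real_of_int n + Re \<gamma>)"
      by (simp add: a_def power2_eq_square)
    have "Re \<beta> * real_of_int n \<le> \<bar>Re \<beta>\<bar> * \<bar>real_of_int n\<bar>"
      by (metis abs_ge_self abs_mult)
    moreover have "- a * \<bar>real_of_int n\<bar>^2 + B * \<bar>real_of_int n\<bar> \<le> B^2/(4*a)"
      by (rule quad_bound[OF a])
    ultimately have "- a * real_of_int n ^2 + Re \<beta> * real_of_int n + Re \<gamma> \<le> (Re \<gamma> + B^2/(4*a)) + (- \<bar>real_of_int n\<bar>)"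
      by (simp add: B_def algebra_simps)
    then have "exp (- a * real_of_int n ^2 + Re \<beta> * real_of_int n + Re \<gamma>) \<le> exp ((Re \<gamma> + B^2/(4*a)) + (- \<bar>real_of_int n\<bar>))"
      by simp
    also have "exp ((Re \<gamma> + B^2/(4*a)) + (- \<bar>real_of_int n\<bar>)) = K * exp (- \<bar>real_of_int n\<bar>)"
      unfolding K_def by (rule exp_add)
    finally show ?thesis by (subst n1)
  qed
  have s: "(\<lambda>n::int. K * exp (- \<bar>real_of_int n\<bar>)) summable_on UNIV"
    by (rule summable_on_cmult_right[OF exp_abs_int_summable])
  show ?thesis
    by (rule summable_on_comparison_test[OF s]) (use bound in auto)
qed

lemma gauss_summable:
  fixes \<alpha> \<beta> \<gamma> :: complex assumes "Re \<alpha> < 0"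
  shows "(\<lambda>n::int. exp (\<alpha> * of_int n ^2 + \<beta> * of_int n + \<gamma>)) summable_on UNIV"
  by (rule abs_summable_summable[OF gauss_norm_summable[OF assms]])

lemma prod_summable_int:
  fixes u v :: "int \<Rightarrow> complex"
  assumes u: "(\<lambda>n. norm (u n)) summable_on UNIV" and v: "(\<lambda>n. norm (v n)) summable_on UNIV"
  shows "(\<lambda>(m,n). u m * v n) summable_on UNIV"
proof -
  define SV where "SV = (\<Sum>\<^sub>\<infinity>n. norm (v n))"
  have "(\<lambda>(m,n). norm (u m) * norm (v n)) summable_on Sigma UNIV (\<lambda>_. UNIV)"
  proof (rule summable_on_SigmaI[where g="\<lambda>m. norm (u m) * SV"])
    show "((\<lambda>y. case (m, y) of (m, n) \<Rightarrow> norm (u m) * norm (v n)) has_sum norm (u m) * SV) UNIV" for m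
      using has_sum_cmult_right[OF has_sum_infsum[OF v], of "norm (u m)"] by (simp add: SV_def)
    show "(\<lambda>m. norm (u m) * SV) summable_on UNIV"
      using summable_on_cmult_left[OF u] by simp
  qed auto
  then have "(\<lambda>x. norm ((\<lambda>(m,n). u m * v n) x)) summable_on UNIV"
    by (simp add: case_prod_unfold norm_mult)
  then show ?thesis by (rule abs_summable_summable)
qed

lemma prod_infsum_int:
  fixes u v :: "int \<Rightarrow> complex"
  assumes u: "(\<lambda>n. norm (u n)) summable_on UNIV" and v: "(\<lambda>n. norm (v n)) summable_on UNIV"
  shows "(\<Sum>\<^sub>\<infinity>m. u m) * (\<Sum>\<^sub>\<infinity>n. v n) = (\<Sum>\<^sub>\<infinity>(m,n). u m * v n)"
proof -
  have S: "(\<lambda>(m,n). u m * v n) summable_on Sigma UNIV (\<lambda>_. UNIV)"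
    using prod_summable_int[OF u v] by simp
  have "(\<Sum>\<^sub>\<infinity>m. u m) * (\<Sum>\<^sub>\<infinity>n. v n) = (\<Sum>\<^sub>\<infinity>m. u m * (\<Sum>\<^sub>\<infinity>n. v n))"
    by (rule infsum_cmult_left'[symmetric])
  also have "\<dots> = (\<Sum>\<^sub>\<infinity>m. \<Sum>\<^sub>\<infinity>n. u m * v n)"
    by (simp add: infsum_cmult_right')
  also have "\<dots> = (\<Sum>\<^sub>\<infinity>(m,n)\<in>Sigma UNIV (\<lambda>_. UNIV). u m * v n)"
    using infsum_Sigma_banach[OF S] by simp
  finally show ?thesis by simp
qed

definition ft :: "complex \<Rightarrow> complex \<Rightarrow> int \<Rightarrow> complex" where
  "ft \<tau> x n = exp (2 * pi * \<i> * ((1/2) * (of_int n + of_real (1/2))\<^sup>2 * \<tau> + (of_int n + of_real (1/2)) * x))"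

definition hh :: "complex \<Rightarrow> int \<Rightarrow> complex \<Rightarrow> complex" where
  "hh \<tau> k x = exp (2 * pi * \<i> * (of_int k ^ 2 * \<tau> / 4 + of_int k * x / 2))"

definition G0 :: "complex \<Rightarrow> complex \<Rightarrow> complex" where
  "G0 \<tau> x = (\<Sum>\<^sub>\<infinity>p. hh \<tau> (2*p) x)"
definition G1 :: "complex \<Rightarrow> complex \<Rightarrow> complex" where
  "G1 \<tau> x = (\<Sum>\<^sub>\<infinity>p. hh \<tau> (2*p+1) x)"

definition F :: "complex \<Rightarrow> complex \<Rightarrow> complex" where
  "F \<tau> x = (\<Sum>\<^sub>\<infinity>n. ft \<tau> x n)"

lemma theta_char_F: "theta_char 1 e z \<tau> = F \<tau> (z + of_real (e/2))"
  by (simp add: theta_char_def F_def ft_def)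

lemma theta_const_F: "theta_const 1 e \<tau> = F \<tau> (of_real (e/2))"
  by (simp add: theta_const_def theta_char_F)

lemma ft_eq: "ft \<tau> x n = exp ((pi*\<i>*\<tau>) * of_int n ^ 2 + (pi*\<i>*\<tau> + 2*pi*\<i>*x) * of_int n + (pi*\<i>*\<tau>/4 + pi*\<i>*x))"
  unfolding ft_def by (rule arg_cong[where f=exp]) (simp add: power2_eq_square algebra_simps)

lemma hh0_eq: "hh \<tau> (2*p) x = exp ((2*pi*\<i>*\<tau>) * of_int p ^ 2 + (2*pi*\<i>*x) * of_int p + 0)"
  unfolding hh_def by (rule arg_cong[where f=exp]) (simp add: power2_eq_square algebra_simps)

lemma hh1_eq: "hh \<tau> (2*p+1) x = exp ((2*pi*\<i>*\<tau>) * of_int p ^ 2 + (2*pi*\<i>*\<tau> + 2*pi*\<i>*x) * of_int p + (pi*\<i>*\<tau>/2 + pi*\<i>*x))"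
  unfolding hh_def by (rule arg_cong[where f=exp]) (simp add: power2_eq_square field_simps)

lemma ft_ns: "Im \<tau> > 0 \<Longrightarrow> (\<lambda>n. norm (ft \<tau> x n)) summable_on UNIV"
  unfolding ft_eq by (rule gauss_norm_summable) simp
lemma hh0_ns: "Im \<tau> > 0 \<Longrightarrow> (\<lambda>p. norm (hh \<tau> (2*p) x)) summable_on UNIV"
  unfolding hh0_eq by (rule gauss_norm_summable) simp
lemma hh1_ns: "Im \<tau> > 0 \<Longrightarrow> (\<lambda>p. norm (hh \<tau> (2*p+1) x)) summable_on UNIV"
  unfolding hh1_eq by (rule gauss_norm_summable) simp

lemma ftA: "ft \<tau> a (p+r) * ft \<tau> b (p-r-1) = hh \<tau> (2*p) (a+b) * hh \<tau> (2*r+1) (a-b)"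
  unfolding ft_def hh_def exp_add[symmetric]
  by (rule arg_cong[where f=exp]) (simp add: power2_eq_square field_simps)

lemma ftB: "ft \<tau> a (p+r) * ft \<tau> b (p-r) = hh \<tau> (2*p+1) (a+b) * hh \<tau> (2*r) (a-b)"
  unfolding ft_def hh_def exp_add[symmetric]
  by (rule arg_cong[where f=exp]) (simp add: power2_eq_square field_simps)

lemma F_prod:
  assumes "Im \<tau> > 0"
  shows "F \<tau> a * F \<tau> b = G0 \<tau> (a+b) * G1 \<tau> (a-b) + G1 \<tau> (a+b) * G0 \<tau> (a-b)"
proof -
  define T where "T = (\<lambda>(m,n). ft \<tau> a m * ft \<tau> b n)"
  define A where "A = (\<lambda>(p,r). (p+r, p-r-1::int))"
  define B where "B = (\<lambda>(p,r). (p+r, p-r::int))"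
  have ST: "T summable_on UNIV"
    unfolding T_def by (rule prod_summable_int[OF ft_ns ft_ns]) (use assms in auto)
  have injA: "inj A" unfolding A_def inj_def by auto
  have injB: "inj B" unfolding B_def inj_def by auto
  have disj: "range A \<inter> range B = {}"
    unfolding A_def B_def by auto presburger+
  have cover: "range A \<union> range B = UNIV"
  proof -
    have "x \<in> range A \<union> range B" for x
    proof (cases x)
      case (Pair m n)
      show ?thesis
      proof (cases "even (m+n)")
        case True
        then have "B ((m+n) div 2, (m-n) div 2) = x"
          unfolding B_def Pair by auto presburger+
        then show ?thesis by (metis UnI2 rangeI)
      next
        case False
        then have "A ((m+n+1) div 2, (m-n-1) div 2) = x"
          unfolding A_def Pair by auto presburger+
        then show ?thesis by (metis UnI1 rangeI)
      qed
    qed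
    then show ?thesis by auto
  qed
  have "F \<tau> a * F \<tau> b = infsum T UNIV"
    unfolding F_def T_def by (rule prod_infsum_int[OF ft_ns ft_ns]) (use assms in auto)
  also have "\<dots> = infsum T (range A) + infsum T (range B)"
    using infsum_Un_disjoint[OF summable_on_subset_banach[OF ST] summable_on_subset_banach[OF ST] disj] cover
    by simp
  also have "infsum T (range A) = infsum (T \<circ> A) UNIV"
    by (rule infsum_reindex[OF injA])
  also have "T \<circ> A = (\<lambda>(p,r). hh \<tau> (2*p) (a+b) * hh \<tau> (2*r+1) (a-b))"
    unfolding T_def A_def by (auto simp: fun_eq_iff ftA)
  also have "infsum \<dots> UNIV = G0 \<tau> (a+b) * G1 \<tau> (a-b)"
    unfolding G0_def G1_def by (rule prod_infsum_int[OF hh0_ns hh1_ns, symmetric]) (use assms in auto)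
  also have "infsum T (range B) = infsum (T \<circ> B) UNIV"
    by (rule infsum_reindex[OF injB])
  also have "T \<circ> B = (\<lambda>(p,r). hh \<tau> (2*p+1) (a+b) * hh \<tau> (2*r) (a-b))"
    unfolding T_def B_def by (auto simp: fun_eq_iff ftB)
  also have "infsum \<dots> UNIV = G1 \<tau> (a+b) * G0 \<tau> (a-b)"
    unfolding G0_def G1_def by (rule prod_infsum_int[OF hh1_ns hh0_ns, symmetric]) (use assms in auto)
  finally show ?thesis .
qed

lemma hh0_shift: "hh \<tau> (2*p) (x+1) = hh \<tau> (2*p) x"
proof -
  have "hh \<tau> (2*p) (x+1) = exp (2 * pi * \<i> * (of_int (2*p) ^ 2 * \<tau> / 4 + of_int (2*p) * x / 2) + \<i> * (of_int p * (of_real pi * 2)))"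
    unfolding hh_def by (rule arg_cong[where f=exp]) (simp add: field_simps)
  then show ?thesis by (simp only: exp_plus_2pin hh_def)
qed

lemma hh1_shift: "hh \<tau> (2*p+1) (x+1) = - hh \<tau> (2*p+1) x"
proof -
  have "hh \<tau> (2*p+1) (x+1) = exp (2 * pi * \<i> * (of_int (2*p+1) ^ 2 * \<tau> / 4 + of_int (2*p+1) * x / 2)) * exp ((2 * of_int p + 1) * pi * \<i>)"
    unfolding hh_def exp_add[symmetric] by (rule arg_cong[where f=exp]) (simp add: field_simps)
  also have "exp ((2 * of_int p + 1) * pi * \<i>) = -1"
    by (rule exp_integer_2pi_plus1) simp
  finally show ?thesis by (simp add: hh_def)
qed

lemma G0_shift: "G0 \<tau> (x+1) = G0 \<tau> x"
  unfolding G0_def hh0_shift ..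

lemma G1_shift: "G1 \<tau> (x+1) = - G1 \<tau> x"
  unfolding G1_def hh1_shift by (rule infsum_uminus)

lemma G0_neg: "G0 \<tau> (-x) = G0 \<tau> x"
  unfolding G0_def
  by (rule infsum_reindex_bij_witness[where i=uminus and j=uminus]) (auto simp: hh_def)

lemma G1_neg: "G1 \<tau> (-x) = G1 \<tau> x"
  unfolding G1_def
  by (rule infsum_reindex_bij_witness[where i="\<lambda>p. -p-1" and j="\<lambda>p. -p-1"]) (auto simp: hh_def power2_eq_square algebra_simps)

lemma F_pair:
  assumes "Im \<tau> > 0"
  shows "F \<tau> (z + a) * F \<tau> (z + b) = G0 \<tau> (2*z + (a+b)) * G1 \<tau> (a-b) + G1 \<tau> (2*z + (a+b)) * G0 \<tau> (a-b)"
proof -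
  have "z + a + (z + b) = 2*z + (a+b)" "z + a - (z + b) = a - b" by simp_all
  then show ?thesis using F_prod[OF assms, of "z+a" "z+b"] by simp
qed

lemma T_pair:
  assumes "Im \<tau> > 0"
  shows "theta_char 1 e z \<tau> * theta_char 1 e' z \<tau> =
     G0 \<tau> (2*z + of_real ((e+e')/2)) * G1 \<tau> (of_real ((e-e')/2)) + G1 \<tau> (2*z + of_real ((e+e')/2)) * G0 \<tau> (of_real ((e-e')/2))"
  unfolding theta_char_F F_pair[OF assms] by (simp add: add_divide_distrib diff_divide_distrib)

lemma C_pair:
  assumes "Im \<tau> > 0"
  shows "theta_const 1 e \<tau> * theta_const 1 e' \<tau> =
     G0 \<tau> (of_real ((e+e')/2)) * G1 \<tau> (of_real ((e-e')/2)) + G1 \<tau> (of_real ((e+e')/2)) * G0 \<tau> (of_real ((e-e')/2))"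
  using F_pair[OF assms, of 0 "of_real (e/2)" "of_real (e'/2)"]
  unfolding theta_const_F by (simp add: add_divide_distrib diff_divide_distrib)

lemma G1_half: "G1 \<tau> (1/2) = 0"
proof -
  have "G1 \<tau> (-(1/2) + 1) = - G1 \<tau> (-(1/2))" by (rule G1_shift)
  then have "G1 \<tau> (1/2) = - G1 \<tau> (1/2)" using G1_neg[of \<tau> "1/2"] by simp
  then show ?thesis by simp
qed

lemma id1:
  fixes z \<tau> :: complex
  assumes "Im \<tau> > 0"
  shows "(theta_const 1 (1/2) \<tau>)^2 * (theta_char 1 0 z \<tau>)^2
      + (theta_const 1 0 \<tau>)^2 * theta_char 1 (1/2) z \<tau> * theta_char 1 (3/2) z \<tau>
      - (theta_const 1 (1/2) \<tau>)^2 * (theta_char 1 1 z \<tau>)^2 = 0"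
proof -
  have c1: "theta_const 1 (1/2) \<tau> * theta_const 1 (1/2) \<tau> = G0 \<tau> (1/2) * G1 \<tau> 0 + G1 \<tau> (1/2) * G0 \<tau> 0"
    using C_pair[OF assms, of "1/2" "1/2"] by simp
  have c2: "theta_const 1 0 \<tau> * theta_const 1 0 \<tau> = G0 \<tau> 0 * G1 \<tau> 0 + G1 \<tau> 0 * G0 \<tau> 0"
    using C_pair[OF assms, of 0 0] by simp
  have t1: "theta_char 1 0 z \<tau> * theta_char 1 0 z \<tau> = G0 \<tau> (2*z) * G1 \<tau> 0 + G1 \<tau> (2*z) * G0 \<tau> 0"
    using T_pair[OF assms, of 0 z 0] by simp
  have t2: "theta_char 1 (1/2) z \<tau> * theta_char 1 (3/2) z \<tau> = G0 \<tau> (2*z) * G1 \<tau> (1/2) - G1 \<tau> (2*z) * G0 \<tau> (1/2)"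
    using T_pair[OF assms, of "1/2" z "3/2"] G0_shift[of \<tau> "2*z"] G1_shift[of \<tau> "2*z"] G0_neg[of \<tau> "1/2"] G1_neg[of \<tau> "1/2"] by simp
  have t3: "theta_char 1 1 z \<tau> * theta_char 1 1 z \<tau> = G0 \<tau> (2*z) * G1 \<tau> 0 - G1 \<tau> (2*z) * G0 \<tau> 0"
    using T_pair[OF assms, of 1 z 1] G0_shift[of \<tau> "2*z"] G1_shift[of \<tau> "2*z"] by simp
  show ?thesis
    unfolding power2_eq_square using c1 c2 t1 t2 t3 G1_half[of \<tau>] by algebra
qed

lemma G0_refl: "G0 \<tau> (1 - x) = G0 \<tau> x"
  using G0_shift[of \<tau> "-x"] G0_neg[of \<tau> x] by simp
lemma G1_refl: "G1 \<tau> (1 - x) = - G1 \<tau> x"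
  using G1_shift[of \<tau> "-x"] G1_neg[of \<tau> x] by simp

lemma id2:
  fixes z \<tau> :: complex
  assumes "Im \<tau> > 0"
  shows "(theta_const 1 (2/3) \<tau>)^2 * theta_char 1 (1/3) z \<tau> * theta_char 1 (5/3) z \<tau>
      - (theta_const 1 (1/3) \<tau>)^2 * theta_char 1 (2/3) z \<tau> * theta_char 1 (4/3) z \<tau>
      + theta_const 1 0 \<tau> * theta_const 1 (2/3) \<tau> * (theta_char 1 1 z \<tau>)^2 = 0"
proof -
  have c1: "theta_const 1 (2/3) \<tau> * theta_const 1 (2/3) \<tau> = G0 \<tau> (2/3) * G1 \<tau> 0 + G1 \<tau> (2/3) * G0 \<tau> 0"
    using C_pair[OF assms, of "2/3" "2/3"] by simp
  have c2: "theta_const 1 (1/3) \<tau> * theta_const 1 (1/3) \<tau> = G0 \<tau> (1/3) * G1 \<tau> 0 + G1 \<tau> (1/3) * G0 \<tau> 0"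
    using C_pair[OF assms, of "1/3" "1/3"] by simp
  have c3: "theta_const 1 0 \<tau> * theta_const 1 (2/3) \<tau> = G0 \<tau> (1/3) * G1 \<tau> (-(1/3)) + G1 \<tau> (1/3) * G0 \<tau> (-(1/3))"
    using C_pair[OF assms, of 0 "2/3"] by simp
  have t1: "theta_char 1 (1/3) z \<tau> * theta_char 1 (5/3) z \<tau> = G0 \<tau> (2*z+1) * G1 \<tau> (-(2/3)) + G1 \<tau> (2*z+1) * G0 \<tau> (-(2/3))"
    using T_pair[OF assms, of "1/3" z "5/3"] by simp
  have t2: "theta_char 1 (2/3) z \<tau> * theta_char 1 (4/3) z \<tau> = G0 \<tau> (2*z+1) * G1 \<tau> (-(1/3)) + G1 \<tau> (2*z+1) * G0 \<tau> (-(1/3))"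
    using T_pair[OF assms, of "2/3" z "4/3"] by simp
  have t3: "theta_char 1 1 z \<tau> * theta_char 1 1 z \<tau> = G0 \<tau> (2*z+1) * G1 \<tau> 0 + G1 \<tau> (2*z+1) * G0 \<tau> 0"
    using T_pair[OF assms, of 1 z 1] by simp
  have r1: "G0 \<tau> (2/3) = G0 \<tau> (1/3)" "G1 \<tau> (2/3) = - G1 \<tau> (1/3)"
    using G0_refl[of \<tau> "1/3"] G1_refl[of \<tau> "1/3"] by simp_all
  note r2 = G0_neg[of \<tau> "1/3"] G1_neg[of \<tau> "1/3"] G0_neg[of \<tau> "2/3"] G1_neg[of \<tau> "2/3"]
    G0_shift[of \<tau> "2*z"] G1_shift[of \<tau> "2*z"]
  show ?thesis
    unfolding power2_eq_square using c1 c2 c3 t1 t2 t3 r1 r2 by algebra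
qed

lemma id3:
  fixes z \<tau> :: complex
  assumes "Im \<tau> > 0"
  shows "(theta_const 1 (3/4) \<tau>)^2 * theta_char 1 (1/4) z \<tau> * theta_char 1 (7/4) z \<tau>
      - (theta_const 1 (1/4) \<tau>)^2 * theta_char 1 (3/4) z \<tau> * theta_char 1 (5/4) z \<tau>
      + theta_const 1 0 \<tau> * theta_const 1 (1/2) \<tau> * (theta_char 1 1 z \<tau>)^2 = 0"
proof -
  have c1: "theta_const 1 (3/4) \<tau> * theta_const 1 (3/4) \<tau> = G0 \<tau> (3/4) * G1 \<tau> 0 + G1 \<tau> (3/4) * G0 \<tau> 0"
    using C_pair[OF assms, of "3/4" "3/4"] by simp
  have c2: "theta_const 1 (1/4) \<tau> * theta_const 1 (1/4) \<tau> = G0 \<tau> (1/4) * G1 \<tau> 0 + G1 \<tau> (1/4) * G0 \<tau> 0"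
    using C_pair[OF assms, of "1/4" "1/4"] by simp
  have c3: "theta_const 1 0 \<tau> * theta_const 1 (1/2) \<tau> = G0 \<tau> (1/4) * G1 \<tau> (-(1/4)) + G1 \<tau> (1/4) * G0 \<tau> (-(1/4))"
    using C_pair[OF assms, of 0 "1/2"] by simp
  have t1: "theta_char 1 (1/4) z \<tau> * theta_char 1 (7/4) z \<tau> = G0 \<tau> (2*z+1) * G1 \<tau> (-(3/4)) + G1 \<tau> (2*z+1) * G0 \<tau> (-(3/4))"
    using T_pair[OF assms, of "1/4" z "7/4"] by simp
  have t2: "theta_char 1 (3/4) z \<tau> * theta_char 1 (5/4) z \<tau> = G0 \<tau> (2*z+1) * G1 \<tau> (-(1/4)) + G1 \<tau> (2*z+1) * G0 \<tau> (-(1/4))"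
    using T_pair[OF assms, of "3/4" z "5/4"] by simp
  have t3: "theta_char 1 1 z \<tau> * theta_char 1 1 z \<tau> = G0 \<tau> (2*z+1) * G1 \<tau> 0 + G1 \<tau> (2*z+1) * G0 \<tau> 0"
    using T_pair[OF assms, of 1 z 1] by simp
  have r1: "G0 \<tau> (3/4) = G0 \<tau> (1/4)" "G1 \<tau> (3/4) = - G1 \<tau> (1/4)"
    using G0_refl[of \<tau> "1/4"] G1_refl[of \<tau> "1/4"] by simp_all
  note r2 = G0_neg[of \<tau> "1/4"] G1_neg[of \<tau> "1/4"] G0_neg[of \<tau> "3/4"] G1_neg[of \<tau> "3/4"]
    G0_shift[of \<tau> "2*z"] G1_shift[of \<tau> "2*z"]
  show ?thesis
    unfolding power2_eq_square using c1 c2 c3 t1 t2 t3 r1 r2 by algebra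
qed

lemma id4:
  fixes z \<tau> :: complex
  assumes "Im \<tau> > 0"
  shows "(theta_const 1 (3/5) \<tau>)^2 * theta_char 1 (1/5) z \<tau> * theta_char 1 (9/5) z \<tau>
      - (theta_const 1 (1/5) \<tau>)^2 * theta_char 1 (3/5) z \<tau> * theta_char 1 (7/5) z \<tau>
      + theta_const 1 (1/5) \<tau> * theta_const 1 (3/5) \<tau> * (theta_char 1 1 z \<tau>)^2 = 0"
proof -
  have c1: "theta_const 1 (3/5) \<tau> * theta_const 1 (3/5) \<tau> = G0 \<tau> (3/5) * G1 \<tau> 0 + G1 \<tau> (3/5) * G0 \<tau> 0"
    using C_pair[OF assms, of "3/5" "3/5"] by simp
  have c2: "theta_const 1 (1/5) \<tau> * theta_const 1 (1/5) \<tau> = G0 \<tau> (1/5) * G1 \<tau> 0 + G1 \<tau> (1/5) * G0 \<tau> 0"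
    using C_pair[OF assms, of "1/5" "1/5"] by simp
  have c3: "theta_const 1 (1/5) \<tau> * theta_const 1 (3/5) \<tau> = G0 \<tau> (2/5) * G1 \<tau> (-(1/5)) + G1 \<tau> (2/5) * G0 \<tau> (-(1/5))"
    using C_pair[OF assms, of "1/5" "3/5"] by simp
  have t1: "theta_char 1 (1/5) z \<tau> * theta_char 1 (9/5) z \<tau> = G0 \<tau> (2*z+1) * G1 \<tau> (-(4/5)) + G1 \<tau> (2*z+1) * G0 \<tau> (-(4/5))"
    using T_pair[OF assms, of "1/5" z "9/5"] by simp
  have t2: "theta_char 1 (3/5) z \<tau> * theta_char 1 (7/5) z \<tau> = G0 \<tau> (2*z+1) * G1 \<tau> (-(2/5)) + G1 \<tau> (2*z+1) * G0 \<tau> (-(2/5))"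
    using T_pair[OF assms, of "3/5" z "7/5"] by simp
  have t3: "theta_char 1 1 z \<tau> * theta_char 1 1 z \<tau> = G0 \<tau> (2*z+1) * G1 \<tau> 0 + G1 \<tau> (2*z+1) * G0 \<tau> 0"
    using T_pair[OF assms, of 1 z 1] by simp
  have r1: "G0 \<tau> (4/5) = G0 \<tau> (1/5)" "G1 \<tau> (4/5) = - G1 \<tau> (1/5)"
      "G0 \<tau> (3/5) = G0 \<tau> (2/5)" "G1 \<tau> (3/5) = - G1 \<tau> (2/5)"
    using G0_refl[of \<tau> "1/5"] G1_refl[of \<tau> "1/5"] G0_refl[of \<tau> "2/5"] G1_refl[of \<tau> "2/5"] by simp_all
  note r2 = G0_neg[of \<tau> "1/5"] G1_neg[of \<tau> "1/5"] G0_neg[of \<tau> "4/5"] G1_neg[of \<tau> "4/5"]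
    G0_neg[of \<tau> "2/5"] G1_neg[of \<tau> "2/5"]
    G0_shift[of \<tau> "2*z"] G1_shift[of \<tau> "2*z"]
  show ?thesis
    unfolding power2_eq_square using c1 c2 c3 t1 t2 t3 r1 r2 by algebra
qed
theorem mainTheorem1:
  fixes z \<tau> :: complex
  assumes "Im \<tau> > 0"
  shows
   "(theta_const 1 (1/2) \<tau>)^2 * (theta_char 1 0 z \<tau>)^2
      + (theta_const 1 0 \<tau>)^2 * theta_char 1 (1/2) z \<tau> * theta_char 1 (3/2) z \<tau>
      - (theta_const 1 (1/2) \<tau>)^2 * (theta_char 1 1 z \<tau>)^2 = 0 \<and>
   (theta_const 1 (2/3) \<tau>)^2 * theta_char 1 (1/3) z \<tau> * theta_char 1 (5/3) z \<tau>
      - (theta_const 1 (1/3) \<tau>)^2 * theta_char 1 (2/3) z \<tau> * theta_char 1 (4/3) z \<tau>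
      + theta_const 1 0 \<tau> * theta_const 1 (2/3) \<tau> * (theta_char 1 1 z \<tau>)^2 = 0 \<and>
   (theta_const 1 (3/4) \<tau>)^2 * theta_char 1 (1/4) z \<tau> * theta_char 1 (7/4) z \<tau>
      - (theta_const 1 (1/4) \<tau>)^2 * theta_char 1 (3/4) z \<tau> * theta_char 1 (5/4) z \<tau>
      + theta_const 1 0 \<tau> * theta_const 1 (1/2) \<tau> * (theta_char 1 1 z \<tau>)^2 = 0 \<and>
   (theta_const 1 (3/5) \<tau>)^2 * theta_char 1 (1/5) z \<tau> * theta_char 1 (9/5) z \<tau>
      - (theta_const 1 (1/5) \<tau>)^2 * theta_char 1 (3/5) z \<tau> * theta_char 1 (7/5) z \<tau>
      + theta_const 1 (1/5) \<tau> * theta_const 1 (3/5) \<tau> * (theta_char 1 1 z \<tau>)^2 = 0"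
  using id1[OF assms] id2[OF assms] id3[OF assms] id4[OF assms] by blast

end
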